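(* Let $n$ be a nonnegative integer, let $f_n(z),g_n(z)\in\mathbb{C}[z]$ be polynomials of length $\ell$ (i.e., of degree $\ell-1$), let $\sigma_n,\tau_n\in\{-1,1\}$, and let $f_{n+1}(z)=f_n(z)+\sigma_n z^\ell f_n^\dagger(-z)$ and $g_{n+1}(z)=g_n(z)+\tau_n z^\ell g_n^\dagger(-z)$. Then $\|f_{n+1}\|_2^2=2\|f_n\|_2^2$ and $\|g_{n+1}\|_2^2=2\|g_n\|_2^2$. Moreover, if for $j\in\{n,n+1\}$ we set \[ u_j=\|f_jg_j\|_2^2,\qquad v_j=\|f_j\widetilde{g}_j\|_2^2,\qquad w_j=\operatorname{Re}\int f_j\widetilde{f}_j\overline{g_j\widetilde{g}_j}, \] then \begin{enumerate} \item $u_{n+1}=2u_n+2v_n+2\sigma_n\tau_n w_n$, \item $v_{n+1}=2u_n+2v_n-2\sigma_n\tau_n w_n$, \item $w_{n+1}=2\sigma_n\tau_n u_n-2\sigma_n\tau_n v_n+2w_n$. \end{enumerate}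
   Context: For a polynomial $a(z)=a_0+\cdots+a_dz^d$ of degree $d$, its length is $1+d$ and $a^\dagger(z)=\overline{a_d}+\overline{a_{d-1}}z+\cdots+\overline{a_0}z^d$; $f_n^\dagger(-z)$ means $f_n^\dagger$ evaluated at $-z$. For a Laurent polynomial $a(z)=\sum_ja_jz^j$: $\widetilde{a}(z)=a(-z)$, $\overline{a(z)}=\sum_j\overline{a_j}z^{-j}$, $\int a$ is the constant coefficient $a_0$ (equivalently $\frac{1}{2\pi}\int_0^{2\pi}a(e^{i\theta})d\theta$), and $\|a\|_p=\left(\frac{1}{2\pi}\int_0^{2\pi}|a(e^{i\theta})|^pd\theta\right)^{1/p}$. *)

theory Defs
  imports "HOL-Analysis.Analysis" "HOL-Computational_Algebra.Polynomial"
begin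

definition plen :: "complex poly \<Rightarrow> nat" where
  "plen p = length (coeffs p)"

definition dagger :: "complex poly \<Rightarrow> complex poly" where
  "dagger a = reflect_poly (map_poly cnj a)"

definition tilde :: "complex poly \<Rightarrow> complex poly" where
  "tilde a = a \<circ>\<^sub>p [:0, -1:]"

text \<open>Normalised integral over the unit circle (= constant coefficient for Laurent polynomials).\<close>
definition circ_int :: "(complex \<Rightarrow> complex) \<Rightarrow> complex" where
  "circ_int F = integral {0..2*pi} (\<lambda>t. F (cis t)) / complex_of_real (2*pi)"

definition l2norm :: "complex poly \<Rightarrow> real" where
  "l2norm a = sqrt ((1 / (2*pi)) * integral {0..2*pi} (\<lambda>t. (cmod (poly a (cis t)))^2))"

end

theory Submission
  imports Defs
begin


definition J :: "(complex \<Rightarrow> real) \<Rightarrow> real" where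
  "J \<phi> = integral {0..2*pi} (\<lambda>t. \<phi> (cis t))"

lemma J_integrable:
  fixes \<phi> :: "complex \<Rightarrow> 'a::banach"
  assumes "continuous_on UNIV \<phi>"
  shows "(\<lambda>t. \<phi> (cis t)) integrable_on {a..b}"
proof -
  have "continuous_on {a..b} (\<lambda>t. \<phi> (cis t))"
    using continuous_on_compose2[OF assms continuous_on_cis[OF continuous_on_id]] by simp
  then show ?thesis by (rule integrable_continuous_real)
qed

lemma J_add:
  assumes "continuous_on UNIV \<phi>" "continuous_on UNIV \<psi>"
  shows "J (\<lambda>z. \<phi> z + \<psi> z) = J \<phi> + J \<psi>"
  unfolding J_def by (rule integral_add[OF J_integrable[OF assms(1)] J_integrable[OF assms(2)]])

lemma J_cmult: "J (\<lambda>z. c * \<phi> z) = c * J \<phi>"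
  unfolding J_def using integral_cmul[of "{0..2*pi}" c "\<lambda>t. \<phi> (cis t)"] by simp

lemma J_cong:
  assumes "\<And>z. cmod z = 1 \<Longrightarrow> \<phi> z = \<psi> z"
  shows "J \<phi> = J \<psi>"
  unfolding J_def by (rule integral_cong) (simp add: assms)

lemma J_shift:
  assumes "continuous_on UNIV \<phi>"
  shows "J (\<lambda>z. \<phi> (- z)) = J \<phi>"
proof -
  define \<psi> where "\<psi> = (\<lambda>t. \<phi> (cis t))"
  have int: "\<psi> integrable_on {a..b}" for a b unfolding \<psi>_def by (rule J_integrable[OF assms])
  have per: "\<psi> (t + c) = \<psi> t" if "c = 2*pi" for t c
    unfolding \<psi>_def that by (simp add: cis.ctr cos_add sin_add)
  have neg: "\<phi> (- cis t) = \<psi> (pi + t)" for t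
    unfolding \<psi>_def using cis_mult[of pi t] by simp
  have e1: "J (\<lambda>z. \<phi> (- z)) = integral {0..2*pi} (\<psi> \<circ> (+) pi)"
    unfolding J_def by (simp add: neg o_def)
  have e2: "integral {0..2*pi} (\<psi> \<circ> (+) pi) = integral {pi..3*pi} \<psi>"
    using integral_shift_Icc_real[of 0 "2*pi" \<psi> pi] by simp
  have e3: "integral {pi..2*pi} \<psi> + integral {2*pi..3*pi} \<psi> = integral {pi..3*pi} \<psi>"
    using Henstock_Kurzweil_Integration.integral_combine[where f=\<psi> and a=pi and c="2*pi" and b="3*pi"] int by simp
  have e4: "integral {2*pi..3*pi} \<psi> = integral {0..pi} (\<psi> \<circ> (+) (2*pi))"
    using integral_shift_Icc_real[of 0 pi \<psi> "2*pi"] by simp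
  have e5: "integral {0..pi} (\<psi> \<circ> (+) (2*pi)) = integral {0..pi} \<psi>"
    by (rule integral_cong) (simp add: per add.commute)
  have e6: "integral {0..pi} \<psi> + integral {pi..2*pi} \<psi> = integral {0..2*pi} \<psi>"
    using Henstock_Kurzweil_Integration.integral_combine[where f=\<psi> and a=0 and c=pi and b="2*pi"] int by simp
  have "J \<phi> = integral {0..2*pi} \<psi>" unfolding J_def \<psi>_def by simp
  then show ?thesis using e1 e2 e3 e4 e5 e6 by linarith
qed

lemma J_odd:
  assumes "continuous_on UNIV \<phi>" "\<And>z. \<phi> (- z) = - \<phi> z"
  shows "J \<phi> = 0"
proof -
  have "J \<phi> = J (\<lambda>z. \<phi> (- z))" using J_shift[OF assms(1)] by simp
  also have "\<dots> = J (\<lambda>z. (-1) * \<phi> z)" by (simp add: assms(2))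
  also have "\<dots> = - J \<phi>" using J_cmult[of "-1" \<phi>] by simp
  finally show ?thesis by simp
qed



lemma cis_int0:
  fixes j :: int assumes "j \<noteq> 0"
  shows "((\<lambda>t. cis (of_int j * t)) has_integral 0) {0..2*pi}"
proof -
  define k where "k = real_of_int j"
  have k0: "k \<noteq> 0" using assms by (simp add: k_def)
  have D: "((\<lambda>t. cis (k*t)) has_vector_derivative (complex_of_real k * \<i> * cis (k*t))) (at t within {0..2*pi})" for t
  proof -
    have "((\<lambda>t. cis (k*t)) has_derivative (\<lambda>h. (k*h) *\<^sub>R (\<i> * cis (k*t)))) (at t within {0..2*pi})"
      by (rule has_derivative_cis[OF has_derivative_mult_right[OF has_derivative_ident]])
    moreover have "(\<lambda>h. (k*h) *\<^sub>R (\<i> * cis (k*t))) = (\<lambda>h. h *\<^sub>R (complex_of_real k * \<i> * cis (k*t)))"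
      by (simp add: fun_eq_iff scaleR_conv_of_real)
    ultimately show ?thesis unfolding has_vector_derivative_def by simp
  qed
  have "((\<lambda>t. complex_of_real k * \<i> * cis (k*t)) has_integral (cis (k*(2*pi)) - cis (k*0))) {0..2*pi}"
    by (rule fundamental_theorem_of_calculus) (simp_all add: D)
  moreover have "cis (k * (2*pi)) = 1"
  proof -
    have "cis (k * (2*pi)) = cis (2*pi * of_int j)" unfolding k_def by (simp only: mult.commute)
    also have "\<dots> = 1" by (rule cis_multiple_2pi) simp
    finally show ?thesis .
  qed
  ultimately have "((\<lambda>t. complex_of_real k * \<i> * cis (k*t)) has_integral 0) {0..2*pi}"
    by simp
  from has_integral_mult_right[OF this, of "inverse (complex_of_real k * \<i>)"]
  have "((\<lambda>t. inverse (complex_of_real k * \<i>) * (complex_of_real k * \<i> * cis (k*t))) has_integral 0) {0..2*pi}"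
    by simp
  moreover have "inverse (complex_of_real k * \<i>) * (complex_of_real k * \<i> * cis (k*t)) = cis (k*t)" for t
  proof -
    have nz: "complex_of_real k * \<i> \<noteq> 0" using k0 by simp
    show ?thesis by (metis nz left_inverse mult.assoc mult.left_neutral)
  qed
  ultimately show ?thesis by (simp add: k_def)
qed


lemma J_Re:
  assumes "continuous_on UNIV h"
  shows "J (\<lambda>z. Re (h z)) = Re (integral {0..2*pi} (\<lambda>t. h (cis t)))"
proof -
  have "(\<lambda>t. h (cis t)) integrable_on {0..2*pi}"
  proof -
    have "continuous_on {0..2*pi} (\<lambda>t. h (cis t))"
      using continuous_on_compose2[OF assms continuous_on_cis[OF continuous_on_id]] by simp
    then show ?thesis by (rule integrable_continuous_real)
  qed
  from integral_linear[OF this bounded_linear_Re] show ?thesis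
    by (simp add: J_def o_def)
qed

lemma J_negpow:
  assumes "degree P < m"
  shows "J (\<lambda>z. Re (cnj z ^ m * poly P z)) = 0"
proof -
  have eq: "cnj (cis t) ^ m * poly P (cis t) =
      (\<Sum>i\<le>degree P. coeff P i * cis (of_int (int i - int m) * t))" for t
  proof -
    have "cnj (cis t) ^ m * poly P (cis t) = (\<Sum>i\<le>degree P. coeff P i * (cis (- t) ^ m * cis t ^ i))"
      by (simp add: poly_altdef sum_distrib_left cis_cnj algebra_simps)
    also have "\<dots> = (\<Sum>i\<le>degree P. coeff P i * cis (of_int (int i - int m) * t))"
    proof (intro sum.cong refl)
      fix i
      have "cis (- t) ^ m * cis t ^ i = cis (real m * (- t)) * cis (real i * t)"
        by (simp only: Complex.DeMoivre)
      also have "\<dots> = cis (of_int (int i - int m) * t)"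
        by (simp add: cis_mult algebra_simps)
      finally show "coeff P i * (cis (- t) ^ m * cis t ^ i) = coeff P i * cis (of_int (int i - int m) * t)"
        by simp
    qed
    finally show ?thesis .
  qed
  have "((\<lambda>t. \<Sum>i\<le>degree P. coeff P i * cis (of_int (int i - int m) * t)) has_integral
          (\<Sum>i\<le>degree P. coeff P i * 0)) {0..2*pi}"
    by (intro has_integral_sum has_integral_mult_right cis_int0) (use assms in auto)
  then have "integral {0..2*pi} (\<lambda>t. cnj (cis t) ^ m * poly P (cis t)) = 0"
    by (simp add: eq integral_unique)
  moreover have c: "continuous_on UNIV (\<lambda>z. cnj z ^ m * poly P z)"
    by (intro continuous_intros)
  ultimately show ?thesis using J_Re[OF c] by simp
qed



lemma ofRe: "complex_of_real (Re w) = (w + cnj w) / 2"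
  by (simp add: complex_eq_iff)

lemma ofsq: "complex_of_real ((cmod w)^2) = w * cnj w"
  by (rule complex_norm_square)

lemmas cexp = ofRe ofsq of_real_add of_real_mult of_real_diff of_real_numeral
  complex_cnj_mult complex_cnj_add complex_cnj_diff complex_cnj_complex_of_real complex_cnj_cnj complex_cnj_divide
  complex_cnj_power complex_cnj_numeral complex_cnj_minus of_real_minus of_real_neg_numeral

lemma pt_norm:
  fixes a c e :: complex and s :: real
  assumes e: "e * cnj e = 1" and s: "s^2 = 1"
  shows "(cmod (a + s * e * cnj c))^2 = (cmod a)^2 + (cmod c)^2 + Re (2 * s * cnj e * (a * c))" (is "?L = ?R")
proof -
  have s': "complex_of_real s ^ 2 = 1" using s by (metis of_real_eq_1_iff of_real_power)
  have "complex_of_real ?L = complex_of_real ?R"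
    unfolding cexp using e s' by algebra
  then show ?thesis by (simp only: of_real_eq_iff)
qed

lemma pt_u:
  fixes a b c d e :: complex and s t :: real
  assumes e: "e * cnj e = 1" and s: "s^2 = 1" and t: "t^2 = 1"
  shows "(cmod ((a + s * e * cnj c) * (b + t * e * cnj d)))^2 =
     (cmod (a*b))^2 + (cmod (c*d))^2 + (cmod (a*d))^2 + (cmod (c*b))^2
     + 2 * s * t * Re (a * c * cnj (b * d)) + 2 * s * t * Re (cnj e ^ 2 * (a * c * b * d))
     + Re (2 * cnj e * (s * a * c * (b * cnj b + d * cnj d) + t * b * d * (a * cnj a + c * cnj c)))" (is "?L = ?R")
proof -
  have s': "complex_of_real s ^ 2 = 1" using s by (metis of_real_eq_1_iff of_real_power)
  have t': "complex_of_real t ^ 2 = 1" using t by (metis of_real_eq_1_iff of_real_power)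
  have "complex_of_real ?L = complex_of_real ?R"
    unfolding cexp using e s' t' by algebra
  then show ?thesis by (simp only: of_real_eq_iff)
qed

lemma pt_v:
  fixes a b c d e :: complex and s t :: real
  assumes e: "e * cnj e = 1" and s: "s^2 = 1" and t: "t^2 = 1"
  shows "(cmod ((a + s * e * cnj c) * (d - t * e * cnj b)))^2 =
     (cmod (a*b))^2 + (cmod (c*d))^2 + (cmod (a*d))^2 + (cmod (c*b))^2
     + (- 2 * s * t) * Re (a * c * cnj (b * d)) + (- 2 * s * t) * Re (cnj e ^ 2 * (a * c * b * d))
     + Re (2 * cnj e * (s * a * c * (b * cnj b + d * cnj d) - t * b * d * (a * cnj a + c * cnj c)))" (is "?L = ?R")
proof -
  have s': "complex_of_real s ^ 2 = 1" using s by (metis of_real_eq_1_iff of_real_power)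
  have t': "complex_of_real t ^ 2 = 1" using t by (metis of_real_eq_1_iff of_real_power)
  have "complex_of_real ?L = complex_of_real ?R"
    unfolding cexp using e s' t' by algebra
  then show ?thesis by (simp only: of_real_eq_iff)
qed

lemma pt_w:
  fixes a b c d e :: complex and s t :: real
  assumes e: "e * cnj e = 1" and s: "s^2 = 1" and t: "t^2 = 1"
  shows "Re ((a + s * e * cnj c) * (c - s * e * cnj a) * cnj ((b + t * e * cnj d) * (d - t * e * cnj b))) =
     (s * t) * (cmod (a*b))^2 + (s * t) * (cmod (c*d))^2 + (- s * t) * (cmod (a*d))^2 + (- s * t) * (cmod (c*b))^2
     + 2 * Re (a * c * cnj (b * d)) + (- 2) * Re (cnj e ^ 2 * (a * c * b * d))" (is "?L = ?R")
proof -
  have s': "complex_of_real s ^ 2 = 1" using s by (metis of_real_eq_1_iff of_real_power)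
  have t': "complex_of_real t ^ 2 = 1" using t by (metis of_real_eq_1_iff of_real_power)
  have "complex_of_real ?L = complex_of_real ?R"
    unfolding cexp using e s' t' by algebra
  then show ?thesis by (simp only: of_real_eq_iff)
qed



lemma poly_tilde: "poly (tilde p) z = poly p (- z)"
  by (simp add: tilde_def poly_pcompose)

lemma degree_tilde: "degree (tilde p) = degree p"
  by (simp add: tilde_def degree_pcompose)

lemma inv_unit: "cmod z = 1 \<Longrightarrow> inverse z = cnj z"
proof -
  assume "cmod z = 1"
  then have "z * cnj z = 1" using complex_norm_square[of z] by simp
  then show ?thesis by (simp add: inverse_unique)
qed

lemma plen_degree: "plen p = l \<Longrightarrow> 1 \<le> l \<Longrightarrow> degree p = l - 1"
  unfolding plen_def by (metis One_nat_def diff_Suc_1 le_antisym length_coeffs_degree list.size(3) not_less_eq_eq coeffs_0_eq_Nil zero_le)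

lemma poly_dagger:
  assumes "plen p = l" "1 \<le> l" "cmod z = 1"
  shows "poly (dagger p) z = z^(l-1) * cnj (poly p z)"
proof -
  have z0: "z \<noteq> 0" using assms(3) by auto
  have "degree (map_poly cnj p) = degree p" by (rule degree_map_poly) simp
  then have "poly (dagger p) z = z ^ degree p * poly (map_poly cnj p) (inverse z)"
    unfolding dagger_def using poly_reflect_poly_nz[OF z0] by simp
  also have "\<dots> = z ^ (l-1) * cnj (poly p z)"
    using plen_degree[OF assms(1,2)] inv_unit[OF assms(3)] by simp
  finally show ?thesis .
qed

lemma step_poly:
  assumes "plen p = l" "1 \<le> l" "cmod z = 1"
    and "q = p + smult (complex_of_real s) (monom 1 l * tilde (dagger p))"
  shows "poly q z = poly p z + complex_of_real s * (z^l * (-z)^(l-1)) * cnj (poly p (-z))"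
proof -
  have "poly q z = poly p z + complex_of_real s * (z^l * poly (dagger p) (-z))"
    using assms(4) by (simp add: poly_monom poly_tilde)
  also have "poly (dagger p) (-z) = (-z)^(l-1) * cnj (poly p (-z))"
    using poly_dagger[OF assms(1,2)] assms(3) by simp
  finally show ?thesis by (simp add: mult.assoc)
qed

lemma L2: "(l2norm p)^2 = J (\<lambda>z. (cmod (poly p z))^2) / (2*pi)"
proof -
  have c: "continuous_on UNIV (\<lambda>z. (cmod (poly p z))^2)" by (intro continuous_intros)
  have "0 \<le> integral {0..2*pi} (\<lambda>t. (cmod (poly p (cis t)))^2)"
    by (rule integral_nonneg[OF J_integrable[OF c]]) simp
  then show ?thesis unfolding l2norm_def J_def by simp
qed

lemma Wre:
  assumes "continuous_on UNIV h"
  shows "Re (circ_int h) = J (\<lambda>z. Re (h z)) / (2*pi)"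
  unfolding circ_int_def J_Re[OF assms] by (simp add: Re_divide_of_real)



lemma J_add3:
  assumes "continuous_on UNIV p1" "continuous_on UNIV p2" "continuous_on UNIV p3"
  shows "J (\<lambda>z. p1 z + p2 z + p3 z) = J p1 + J p2 + J p3"
proof -
  have "J (\<lambda>z. p1 z + p2 z + p3 z) = J (\<lambda>z. p1 z + p2 z) + J p3"
    by (rule J_add) (intro continuous_intros assms)+
  also have "J (\<lambda>z. p1 z + p2 z) = J p1 + J p2" by (rule J_add) (intro continuous_intros assms)+
  finally show ?thesis .
qed

lemma J_add7:
  assumes "continuous_on UNIV p1" "continuous_on UNIV p2" "continuous_on UNIV p3"
    "continuous_on UNIV p4" "continuous_on UNIV p5" "continuous_on UNIV p6" "continuous_on UNIV p7"
  shows "J (\<lambda>z. p1 z + p2 z + p3 z + p4 z + p5 z + p6 z + p7 z) =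
     J p1 + J p2 + J p3 + J p4 + J p5 + J p6 + J p7"
proof -
  have "J (\<lambda>z. p1 z + p2 z + p3 z + p4 z + p5 z + p6 z + p7 z) = J (\<lambda>z. p1 z + p2 z + p3 z + p4 z + p5 z + p6 z) + J p7"
    by (rule J_add) (intro continuous_intros assms)+
  also have "J (\<lambda>z. p1 z + p2 z + p3 z + p4 z + p5 z + p6 z) = J (\<lambda>z. p1 z + p2 z + p3 z + p4 z + p5 z) + J p6"
    by (rule J_add) (intro continuous_intros assms)+
  also have "J (\<lambda>z. p1 z + p2 z + p3 z + p4 z + p5 z) = J (\<lambda>z. p1 z + p2 z + p3 z + p4 z) + J p5"
    by (rule J_add) (intro continuous_intros assms)+
  also have "J (\<lambda>z. p1 z + p2 z + p3 z + p4 z) = J (\<lambda>z. p1 z + p2 z + p3 z) + J p4"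
    by (rule J_add) (intro continuous_intros assms)+
  also have "J (\<lambda>z. p1 z + p2 z + p3 z) = J p1 + J p2 + J p3" by (rule J_add3[OF assms(1-3)])
  finally show ?thesis .
qed

lemma J_add6:
  assumes "continuous_on UNIV p1" "continuous_on UNIV p2" "continuous_on UNIV p3"
    "continuous_on UNIV p4" "continuous_on UNIV p5" "continuous_on UNIV p6"
  shows "J (\<lambda>z. p1 z + p2 z + p3 z + p4 z + p5 z + p6 z) =
     J p1 + J p2 + J p3 + J p4 + J p5 + J p6"
  using J_add7[OF assms continuous_on_const[of UNIV 0]] by (simp add: J_def)



theorem lemma2p3:
  fixes f g :: "nat \<Rightarrow> complex poly" and \<sigma> \<tau> :: "nat \<Rightarrow> real"
    and n l :: nat
  assumes "plen (f n) = l" and "plen (g n) = l"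
    and "\<sigma> n \<in> {-1, 1}" and "\<tau> n \<in> {-1, 1}"
    and "f (Suc n) = f n + smult (complex_of_real (\<sigma> n)) (monom 1 l * tilde (dagger (f n)))"
    and "g (Suc n) = g n + smult (complex_of_real (\<tau> n)) (monom 1 l * tilde (dagger (g n)))"
  defines "u \<equiv> \<lambda>j. (l2norm (f j * g j))^2"
    and "v \<equiv> \<lambda>j. (l2norm (f j * tilde (g j)))^2"
    and "w \<equiv> \<lambda>j. Re (circ_int (\<lambda>z. poly (f j) z * poly (tilde (f j)) z
                                   * cnj (poly (g j) z * poly (tilde (g j)) z)))"
  shows "(l2norm (f (Suc n)))^2 = 2 * (l2norm (f n))^2 \<and>
         (l2norm (g (Suc n)))^2 = 2 * (l2norm (g n))^2 \<and>
         u (Suc n) = 2 * u n + 2 * v n + 2 * \<sigma> n * \<tau> n * w n \<and>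
         v (Suc n) = 2 * u n + 2 * v n - 2 * \<sigma> n * \<tau> n * w n \<and>
         w (Suc n) = 2 * \<sigma> n * \<tau> n * u n - 2 * \<sigma> n * \<tau> n * v n + 2 * w n"
proof (cases "l = 0")
  case True
  have F0: "f n = 0" using assms(1) True by (simp add: plen_def)
  have G0: "g n = 0" using assms(2) True by (simp add: plen_def)
  have D0: "dagger 0 = 0" by (simp add: dagger_def)
  have T0: "tilde 0 = 0" by (simp add: tilde_def)
  have F1: "f (Suc n) = 0" using assms(5) F0 D0 T0 by simp
  have G1: "g (Suc n) = 0" using assms(6) G0 D0 T0 by simp
  show ?thesis unfolding u_def v_def w_def
    by (simp add: F0 G0 F1 G1 T0 l2norm_def circ_int_def)
next
  case False
  then have l1: "1 \<le> l" by simp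
  define s where "s = \<sigma> n"
  define t where "t = \<tau> n"
  have s2: "s^2 = 1" using assms(3) by (auto simp: s_def)
  have t2: "t^2 = 1" using assms(4) by (auto simp: t_def)
  define F where "F = f n"
  define G where "G = g n"
  define e where "e z = z^l * (-z)^(l-1)" for z :: complex
  define a where "a z = poly F z" for z
  define c where "c z = poly F (-z)" for z
  define b where "b z = poly G z" for z
  define d where "d z = poly G (-z)" for z
  have ca: "continuous_on UNIV a" unfolding a_def by (intro continuous_intros)
  have cb: "continuous_on UNIV b" unfolding b_def by (intro continuous_intros)
  have cc: "continuous_on UNIV c" unfolding c_def by (intro continuous_intros)
  have cd: "continuous_on UNIV d" unfolding d_def by (intro continuous_intros)
  have ce: "continuous_on UNIV e" unfolding e_def by (intro continuous_intros)
  have am: "a (-z) = c z" for z by (simp add: a_def c_def)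
  have cm: "c (-z) = a z" for z by (simp add: a_def c_def)
  have bm: "b (-z) = d z" for z by (simp add: b_def d_def)
  have dm: "d (-z) = b z" for z by (simp add: b_def d_def)
  have em: "e (-z) = - e z" for z
  proof -
    obtain k where k: "l = Suc k" using l1 by (cases l) auto
    show ?thesis unfolding e_def k by simp
  qed
  have eu: "e z * cnj (e z) = 1" if "cmod z = 1" for z
  proof -
    have "cmod (e z) = 1" unfolding e_def using that by (simp add: norm_mult norm_power)
    then show ?thesis using complex_norm_square[of "e z"] by simp
  qed
  have esq: "cnj (e z) ^ 2 = cnj z ^ (4*l-2)" for z
  proof -
    obtain k where k: "l = Suc k" using l1 by (cases l) auto
    have "e z ^ 2 = z ^ (4*l-2)"
      unfolding e_def k by (simp add: power_mult_distrib power_mult[symmetric] power_add[symmetric] power_minus_even algebra_simps)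
    then show ?thesis by (metis complex_cnj_power)
  qed
  have F1: "poly (f (Suc n)) z = a z + s * e z * cnj (c z)" if "cmod z = 1" for z
    using step_poly[OF assms(1) l1 that assms(5)] by (simp add: a_def c_def e_def F_def s_def)
  have G1: "poly (g (Suc n)) z = b z + t * e z * cnj (d z)" if "cmod z = 1" for z
    using step_poly[OF assms(2) l1 that assms(6)] by (simp add: b_def d_def e_def G_def t_def)
  have F1m: "poly (f (Suc n)) (-z) = c z - s * e z * cnj (a z)" if "cmod z = 1" for z
    using F1[of "-z"] that by (simp add: am cm em)
  have G1m: "poly (g (Suc n)) (-z) = d z - t * e z * cnj (b z)" if "cmod z = 1" for z
    using G1[of "-z"] that by (simp add: bm dm em)
  have pm: "poly (p * q) z = poly p z * poly q z" for p q z by simp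
  have cab: "continuous_on UNIV (\<lambda>z. (cmod (a z * b z))^2)" by (intro continuous_intros ca cb)
  have ccd: "continuous_on UNIV (\<lambda>z. (cmod (c z * d z))^2)" by (intro continuous_intros cc cd)
  have cad: "continuous_on UNIV (\<lambda>z. (cmod (a z * d z))^2)" by (intro continuous_intros ca cd)
  have ccb: "continuous_on UNIV (\<lambda>z. (cmod (c z * b z))^2)" by (intro continuous_intros cc cb)
  have cW: "continuous_on UNIV (\<lambda>z. Re (a z * c z * cnj (b z * d z)))" by (intro continuous_intros ca cb cc cd)
  have cZ: "continuous_on UNIV (\<lambda>z. Re (cnj (e z) ^ 2 * (a z * c z * b z * d z)))" by (intro continuous_intros ca cb cc cd ce)
  define Jab where "Jab = J (\<lambda>z. (cmod (a z * b z))^2)"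
  define Jad where "Jad = J (\<lambda>z. (cmod (a z * d z))^2)"
  define W0 where "W0 = J (\<lambda>z. Re (a z * c z * cnj (b z * d z)))"
  have un: "u n = Jab / (2*pi)"
    unfolding u_def Jab_def L2 a_def b_def F_def G_def by simp
  have vn: "v n = Jad / (2*pi)"
    unfolding v_def Jad_def L2 a_def d_def F_def G_def by (simp add: poly_tilde)
  have wn: "w n = W0 / (2*pi)"
  proof -
    have "w n = J (\<lambda>z. Re (poly (f n) z * poly (tilde (f n)) z * cnj (poly (g n) z * poly (tilde (g n)) z))) / (2*pi)"
      unfolding w_def by (rule Wre) (intro continuous_intros)
    then show ?thesis unfolding W0_def a_def b_def c_def d_def F_def G_def by (simp add: poly_tilde)
  qed
  have Jcd: "J (\<lambda>z. (cmod (c z * d z))^2) = Jab"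
    unfolding Jab_def using J_shift[OF cab] by (simp add: am bm)
  have Jcb: "J (\<lambda>z. (cmod (c z * b z))^2) = Jad"
    unfolding Jad_def using J_shift[OF cad] by (simp add: am dm)
  have Z0: "J (\<lambda>z. Re (cnj (e z) ^ 2 * (a z * c z * b z * d z))) = 0"
  proof -
    define P where "P = F * tilde F * G * tilde G"
    have dF: "degree F = l - 1" using plen_degree[OF assms(1) l1] by (simp add: F_def)
    have dG: "degree G = l - 1" using plen_degree[OF assms(2) l1] by (simp add: G_def)
    have "degree P \<le> degree F + degree (tilde F) + degree G + degree (tilde G)"
      using degree_mult_le[of "F * tilde F * G" "tilde G"] degree_mult_le[of "F * tilde F" G]
        degree_mult_le[of F "tilde F"] unfolding P_def by linarith
    then have "degree P < 4*l-2" using dF dG l1 by (simp add: degree_tilde)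
    then have "J (\<lambda>z. Re (cnj z ^ (4*l-2) * poly P z)) = 0" by (rule J_negpow)
    moreover have "J (\<lambda>z. Re (cnj (e z) ^ 2 * (a z * c z * b z * d z))) = J (\<lambda>z. Re (cnj z ^ (4*l-2) * poly P z))"
      by (rule J_cong) (simp add: esq P_def a_def b_def c_def d_def poly_tilde mult_ac)
    ultimately show ?thesis by simp
  qed
  have normF: "(l2norm (f (Suc n)))^2 = 2 * (l2norm (f n))^2"
  proof -
    have c1: "continuous_on UNIV (\<lambda>z. (cmod (a z))^2)" by (intro continuous_intros ca)
    have c2: "continuous_on UNIV (\<lambda>z. (cmod (c z))^2)" by (intro continuous_intros cc)
    have c3: "continuous_on UNIV (\<lambda>z. Re (2 * s * cnj (e z) * (a z * c z)))" by (intro continuous_intros ca cc ce)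
    have "J (\<lambda>z. (cmod (poly (f (Suc n)) z))^2) = J (\<lambda>z. (cmod (a z))^2 + (cmod (c z))^2 + Re (2 * s * cnj (e z) * (a z * c z)))"
      by (rule J_cong) (simp only: F1 pt_norm[OF eu s2])
    also have "\<dots> = J (\<lambda>z. (cmod (a z))^2) + J (\<lambda>z. (cmod (c z))^2) + J (\<lambda>z. Re (2 * s * cnj (e z) * (a z * c z)))"
      by (rule J_add3[OF c1 c2 c3])
    also have "J (\<lambda>z. (cmod (c z))^2) = J (\<lambda>z. (cmod (a z))^2)"
      using J_shift[OF c1] by (simp add: am)
    also have "J (\<lambda>z. Re (2 * s * cnj (e z) * (a z * c z))) = 0"
      by (rule J_odd[OF c3]) (simp add: am cm em mult_ac)
    finally show ?thesis unfolding L2 a_def F_def by simp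
  qed
  have normG: "(l2norm (g (Suc n)))^2 = 2 * (l2norm (g n))^2"
  proof -
    have c1: "continuous_on UNIV (\<lambda>z. (cmod (b z))^2)" by (intro continuous_intros cb)
    have c2: "continuous_on UNIV (\<lambda>z. (cmod (d z))^2)" by (intro continuous_intros cd)
    have c3: "continuous_on UNIV (\<lambda>z. Re (2 * t * cnj (e z) * (b z * d z)))" by (intro continuous_intros cb cd ce)
    have "J (\<lambda>z. (cmod (poly (g (Suc n)) z))^2) = J (\<lambda>z. (cmod (b z))^2 + (cmod (d z))^2 + Re (2 * t * cnj (e z) * (b z * d z)))"
      by (rule J_cong) (simp only: G1 pt_norm[OF eu t2])
    also have "\<dots> = J (\<lambda>z. (cmod (b z))^2) + J (\<lambda>z. (cmod (d z))^2) + J (\<lambda>z. Re (2 * t * cnj (e z) * (b z * d z)))"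
      by (rule J_add3[OF c1 c2 c3])
    also have "J (\<lambda>z. (cmod (d z))^2) = J (\<lambda>z. (cmod (b z))^2)"
      using J_shift[OF c1] by (simp add: bm)
    also have "J (\<lambda>z. Re (2 * t * cnj (e z) * (b z * d z))) = 0"
      by (rule J_odd[OF c3]) (simp add: bm dm em mult_ac)
    finally show ?thesis unfolding L2 b_def G_def by simp
  qed
  have c2W: "continuous_on UNIV (\<lambda>z. 2 * s * t * Re (a z * c z * cnj (b z * d z)))" by (intro continuous_intros cW)
  have c2Z: "continuous_on UNIV (\<lambda>z. 2 * s * t * Re (cnj (e z) ^ 2 * (a z * c z * b z * d z)))" by (intro continuous_intros cZ)
  have JW: "J (\<lambda>z. k * Re (a z * c z * cnj (b z * d z))) = k * W0" for k
    unfolding W0_def by (rule J_cmult)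
  have JZ: "J (\<lambda>z. k * Re (cnj (e z) ^ 2 * (a z * c z * b z * d z))) = 0" for k
    using J_cmult[of k "\<lambda>z. Re (cnj (e z) ^ 2 * (a z * c z * b z * d z))"] Z0 by simp
  have uS: "u (Suc n) = (2 * Jab + 2 * Jad + 2 * s * t * W0) / (2*pi)"
  proof -
    define Od where "Od z = Re (2 * cnj (e z) * (s * a z * c z * (b z * cnj (b z) + d z * cnj (d z)) + t * b z * d z * (a z * cnj (a z) + c z * cnj (c z))))" for z
    have cO: "continuous_on UNIV Od" unfolding Od_def by (intro continuous_intros ca cb cc cd ce)
    have JO: "J Od = 0" by (rule J_odd[OF cO]) (simp add: Od_def am bm cm dm em ac_simps)
    have "J (\<lambda>z. (cmod (poly (f (Suc n) * g (Suc n)) z))^2) =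
      J (\<lambda>z. (cmod (a z * b z))^2 + (cmod (c z * d z))^2 + (cmod (a z * d z))^2 + (cmod (c z * b z))^2
        + 2 * s * t * Re (a z * c z * cnj (b z * d z)) + 2 * s * t * Re (cnj (e z) ^ 2 * (a z * c z * b z * d z)) + Od z)"
      unfolding Od_def by (rule J_cong) (simp only: pm F1 G1 pt_u[OF eu s2 t2])
    also have "\<dots> = Jab + Jab + Jad + Jad + 2 * s * t * W0 + 0 + 0"
      using J_add7[OF cab ccd cad ccb c2W c2Z cO] JW[of "2 * s * t"] JZ[of "2 * s * t"] JO Jcd Jcb
      by (simp add: Jab_def Jad_def)
    finally show ?thesis unfolding u_def L2 by simp
  qed
  have vS: "v (Suc n) = (2 * Jab + 2 * Jad - 2 * s * t * W0) / (2*pi)"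
  proof -
    define Od where "Od z = Re (2 * cnj (e z) * (s * a z * c z * (b z * cnj (b z) + d z * cnj (d z)) - t * b z * d z * (a z * cnj (a z) + c z * cnj (c z))))" for z
    have cO: "continuous_on UNIV Od" unfolding Od_def by (intro continuous_intros ca cb cc cd ce)
    have JO: "J Od = 0" by (rule J_odd[OF cO]) (simp add: Od_def am bm cm dm em ac_simps)
    have c5: "continuous_on UNIV (\<lambda>z. (- 2 * s * t) * Re (a z * c z * cnj (b z * d z)))" by (intro continuous_intros cW)
    have c6: "continuous_on UNIV (\<lambda>z. (- 2 * s * t) * Re (cnj (e z) ^ 2 * (a z * c z * b z * d z)))" by (intro continuous_intros cZ)
    have "J (\<lambda>z. (cmod (poly (f (Suc n) * tilde (g (Suc n))) z))^2) =
      J (\<lambda>z. (cmod (a z * b z))^2 + (cmod (c z * d z))^2 + (cmod (a z * d z))^2 + (cmod (c z * b z))^2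
        + (- 2 * s * t) * Re (a z * c z * cnj (b z * d z)) + (- 2 * s * t) * Re (cnj (e z) ^ 2 * (a z * c z * b z * d z)) + Od z)"
      unfolding Od_def by (rule J_cong) (simp only: pm poly_tilde F1 G1m pt_v[OF eu s2 t2])
    also have "\<dots> = Jab + Jab + Jad + Jad + (- 2 * s * t) * W0 + 0 + 0"
      using J_add7[OF cab ccd cad ccb c5 c6 cO] JW[of "- 2 * s * t"] JZ[of "- 2 * s * t"] JO Jcd Jcb
      by (simp add: Jab_def Jad_def)
    finally show ?thesis unfolding v_def L2 by simp
  qed
  have wS: "w (Suc n) = (2 * s * t * Jab - 2 * s * t * Jad + 2 * W0) / (2*pi)"
  proof -
    have c1: "continuous_on UNIV (\<lambda>z. (s * t) * (cmod (a z * b z))^2)" by (intro continuous_intros cab)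
    have c2: "continuous_on UNIV (\<lambda>z. (s * t) * (cmod (c z * d z))^2)" by (intro continuous_intros ccd)
    have c3: "continuous_on UNIV (\<lambda>z. (- s * t) * (cmod (a z * d z))^2)" by (intro continuous_intros cad)
    have c4: "continuous_on UNIV (\<lambda>z. (- s * t) * (cmod (c z * b z))^2)" by (intro continuous_intros ccb)
    have c5: "continuous_on UNIV (\<lambda>z. 2 * Re (a z * c z * cnj (b z * d z)))" by (intro continuous_intros cW)
    have c6: "continuous_on UNIV (\<lambda>z. (- 2) * Re (cnj (e z) ^ 2 * (a z * c z * b z * d z)))" by (intro continuous_intros cZ)
    have "w (Suc n) = J (\<lambda>z. Re (poly (f (Suc n)) z * poly (tilde (f (Suc n))) z * cnj (poly (g (Suc n)) z * poly (tilde (g (Suc n))) z))) / (2*pi)"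
      unfolding w_def by (rule Wre) (intro continuous_intros)
    also have "J (\<lambda>z. Re (poly (f (Suc n)) z * poly (tilde (f (Suc n))) z * cnj (poly (g (Suc n)) z * poly (tilde (g (Suc n))) z))) =
      J (\<lambda>z. (s * t) * (cmod (a z * b z))^2 + (s * t) * (cmod (c z * d z))^2 + (- s * t) * (cmod (a z * d z))^2 + (- s * t) * (cmod (c z * b z))^2
        + 2 * Re (a z * c z * cnj (b z * d z)) + (- 2) * Re (cnj (e z) ^ 2 * (a z * c z * b z * d z)))"
      by (rule J_cong) (simp only: poly_tilde F1 F1m G1 G1m pt_w[OF eu s2 t2])
    also have "\<dots> = (s * t) * Jab + (s * t) * Jab + (- s * t) * Jad + (- s * t) * Jad + 2 * W0 + 0"
      using J_add6[OF c1 c2 c3 c4 c5 c6] JW[of 2] JZ[of "- 2"] Jcd Jcb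
        J_cmult[of "s * t" "\<lambda>z. (cmod (a z * b z))^2"] J_cmult[of "s * t" "\<lambda>z. (cmod (c z * d z))^2"]
        J_cmult[of "- s * t" "\<lambda>z. (cmod (a z * d z))^2"] J_cmult[of "- s * t" "\<lambda>z. (cmod (c z * b z))^2"]
      by (simp add: Jab_def Jad_def)
    finally show ?thesis by (simp add: algebra_simps)
  qed
  have pi0: "2 * pi \<noteq> 0" by simp
  have Jab_eq: "Jab = u n * (2*pi)" using un pi0 by (simp add: field_simps)
  have Jad_eq: "Jad = v n * (2*pi)" using vn pi0 by (simp add: field_simps)
  have W0_eq: "W0 = w n * (2*pi)" using wn pi0 by (simp add: field_simps)
  have "u (Suc n) = 2 * u n + 2 * v n + 2 * s * t * w n"
    unfolding uS Jab_eq Jad_eq W0_eq using pi0 by (simp add: field_simps)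
  moreover have "v (Suc n) = 2 * u n + 2 * v n - 2 * s * t * w n"
    unfolding vS Jab_eq Jad_eq W0_eq using pi0 by (simp add: field_simps)
  moreover have "w (Suc n) = 2 * s * t * u n - 2 * s * t * v n + 2 * w n"
    unfolding wS Jab_eq Jad_eq W0_eq using pi0 by (simp add: field_simps)
  ultimately show ?thesis using normF normG unfolding s_def t_def by blast
qed


end
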